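(* Let $M\in\mathbb{R}$ and let $f:B(0,e^M)\to\mathbb{R}^2$ be a quasiconformal map with $f(0)=0$. Suppose that for some $t_0<M$ the image under $f$ of the circle $\{|z|=e^{t_0}\}$ is a non-rectifiable curve. Then $\widetilde{\rho_f}$ is not bi-Lipschitz at $t_0$, i.e. it is not bi-Lipschitz on any neighbourhood of $t_0$.
   Context: Mean radius: for $0<r<e^M$, $\rho_f(r)=\left(\operatorname{area} f(B(0,r))/\pi\right)^{1/2}$, where area is two-dimensional Lebesgue measure. Its logarithmic transform is $\widetilde{\rho_f}:(-\infty,M)\to\mathbb{R}$, $\widetilde{\rho_f}(t)=\ln\rho_f(e^t)$. *)

theory Defs
  imports "HOL-Analysis.Analysis"
begin

text \<open>The plane R^2 is identified with the complex numbers.\<close>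

definition max_stretch :: "(complex \<Rightarrow> complex) \<Rightarrow> complex \<Rightarrow> real \<Rightarrow> real" where
  "max_stretch f x r = Sup ((\<lambda>y. norm (f y - f x)) ` sphere x r)"

definition min_stretch :: "(complex \<Rightarrow> complex) \<Rightarrow> complex \<Rightarrow> real \<Rightarrow> real" where
  "min_stretch f x r = Inf ((\<lambda>y. norm (f y - f x)) ` sphere x r)"

text \<open>Quasiconformal map on an open set S (metric definition): a homeomorphism of S onto
  its image whose linear dilatation limsup_{r->0} L_f(x,r)/l_f(x,r) is uniformly bounded on S.\<close>
definition quasiconformal_on :: "complex set \<Rightarrow> (complex \<Rightarrow> complex) \<Rightarrow> bool" where
  "quasiconformal_on S f \<longleftrightarrow>
     open S \<and> inj_on f S \<and> continuous_on S f \<and> continuous_on (f ` S) (inv_into S f) \<and>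
     (\<exists>H::real. \<forall>x\<in>S.
        Limsup (at_right 0) (\<lambda>r. ereal (max_stretch f x r / min_stretch f x r)) \<le> ereal H)"

definition rectifiable_curve :: "(real \<Rightarrow> complex) \<Rightarrow> bool" where
  "rectifiable_curve g \<longleftrightarrow>
     (\<exists>B::real. \<forall>(n::nat) (t::nat \<Rightarrow> real).
        (\<forall>i\<le>n. t i \<in> {0..1}) \<and> (\<forall>i<n. t i \<le> t (Suc i)) \<longrightarrow>
        (\<Sum>i<n. norm (g (t (Suc i)) - g (t i))) \<le> B)"

definition mean_radius :: "(complex \<Rightarrow> complex) \<Rightarrow> real \<Rightarrow> real" where
  "mean_radius f r = sqrt (measure lebesgue (f ` ball 0 r) / pi)"

definition log_mean_radius :: "(complex \<Rightarrow> complex) \<Rightarrow> real \<Rightarrow> real" where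
  "log_mean_radius f t = ln (mean_radius f (exp t))"

definition bi_lipschitz_on :: "real set \<Rightarrow> (real \<Rightarrow> real) \<Rightarrow> bool" where
  "bi_lipschitz_on U g \<longleftrightarrow>
     (\<exists>L>0. \<forall>s\<in>U. \<forall>t\<in>U. \<bar>s - t\<bar> \<le> L * \<bar>g s - g t\<bar> \<and> \<bar>g s - g t\<bar> \<le> L * \<bar>s - t\<bar>)"

definition bi_lipschitz_at :: "real \<Rightarrow> real \<Rightarrow> (real \<Rightarrow> real) \<Rightarrow> bool" where
  "bi_lipschitz_at M t0 g \<longleftrightarrow>
     (\<exists>U. open U \<and> t0 \<in> U \<and> U \<subseteq> {..<M} \<and> bi_lipschitz_on U g)"

end

theory Submission imports Defs "HOL-Homology.Invariance_of_Domain" begin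


lemma sorted_mono_idx:
  fixes t :: "nat \<Rightarrow> real"
  assumes "\<forall>i<n. t i \<le> t (Suc i)" "i \<le> j" "j \<le> n"
  shows "t i \<le> t j"
  using assms(2,3)
proof (induction j)
  case 0 then show ?case by simp
next
  case (Suc j)
  show ?case
  proof (cases "i = Suc j")
    case True then show ?thesis by simp
  next
    case False
    then have "i \<le> j" using Suc.prems by simp
    then have "t i \<le> t j" using Suc by simp
    also have "t j \<le> t (Suc j)" using assms(1) Suc.prems by simp
    finally show ?thesis .
  qed
qed

lemma measure_small_image:
  fixes Z :: "real set" and h :: "real \<Rightarrow> real"
  assumes "compact Z" "continuous_on Z h" "\<forall>y\<in>Z. \<forall>z\<in>Z. \<bar>h y - h z\<bar> \<le> w" "w \<ge> 0"
  shows "measure lborel (h ` Z) \<le> 2 * w"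
proof (cases "Z = {}")
  case True
  then show ?thesis using assms by auto
next
  case False
  then obtain y0 where y0: "y0 \<in> Z" by auto
  have w: "w \<ge> 0" using assms(4) by simp
  have "h ` Z \<subseteq> {h y0 - w .. h y0 + w}"
    using assms(3) y0 by (force simp: abs_le_iff)
  then have "measure lborel (h ` Z) \<le> measure lborel {h y0 - w .. h y0 + w}"
    by (intro measure_mono_fmeasurable) (auto intro!: borel_compact compact_continuous_image assms fmeasurable_compact)
  also have "\<dots> = 2 * w" using w by simp
  finally show ?thesis .
qed

lemma measure_point_image:
  fixes Z :: "real set" and h :: "real \<Rightarrow> real"
  assumes "\<forall>y\<in>Z. \<forall>z\<in>Z. y = z"
  shows "measure lborel (h ` Z) = 0"
proof (cases "Z = {}")
  case True then show ?thesis by simp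
next
  case False
  then obtain y0 where "y0 \<in> Z" by auto
  then have "Z = {y0}" using assms by auto
  then show ?thesis by simp
qed

lemma card_le2_lemma:
  fixes I :: "nat set"
  assumes fin: "finite I" and no3: "\<And>i j l. i \<in> I \<Longrightarrow> j \<in> I \<Longrightarrow> l \<in> I \<Longrightarrow> i < j \<Longrightarrow> j < l \<Longrightarrow> False"
  shows "card I \<le> 2"
proof (cases "I = {}")
  case True then show ?thesis by simp
next
  case False
  define i1 where "i1 = Min I"
  have i1: "i1 \<in> I" "\<And>j. j \<in> I \<Longrightarrow> i1 \<le> j" using fin False by (auto simp: i1_def)
  have "card (I - {i1}) \<le> Suc 0"
  proof (subst card_le_Suc0_iff_eq)
    show "finite (I - {i1})" using fin by simp
    show "\<forall>a1\<in>I - {i1}. \<forall>a2\<in>I - {i1}. a1 = a2"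
    proof (intro ballI, rule ccontr)
      fix a1 a2 assume a: "a1 \<in> I - {i1}" "a2 \<in> I - {i1}" "a1 \<noteq> a2"
      have "i1 \<le> a1" "i1 \<le> a2" using a i1 by auto
      moreover have "i1 \<noteq> a1" "i1 \<noteq> a2" using a by auto
      ultimately have lt: "i1 < a1" "i1 < a2" by auto
      have I3: "i1 \<in> I" "a1 \<in> I" "a2 \<in> I" using a i1 by auto
      show False
      proof (cases "a1 < a2")
        case True then show False using no3[OF I3 lt(1)] by blast
      next
        case False then have "a2 < a1" using a(3) by linarith
        then show False using no3[OF I3(1) I3(3) I3(2) lt(2)] by blast
      qed
    qed
  qed
  moreover have "card I = Suc (card (I - {i1}))" by (rule card.remove[OF fin i1(1)])
  ultimately show ?thesis by simp
qed

lemma AL: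
  fixes g :: "real \<Rightarrow> complex" and E :: "nat \<Rightarrow> real set" and Bd :: real
  assumes g: "continuous_on {0..1} g"
  and cl: "\<And>k. closed (E k)" and inc: "\<And>k. E k \<subseteq> E (Suc k)"
  and cov: "\<And>s. s \<in> {0..1} \<Longrightarrow> \<exists>k. s \<in> E k"
  and cells: "\<And>k \<beta>. \<beta> > 0 \<Longrightarrow> \<exists>(N::nat) c w \<beta>'. 0 < \<beta>' \<and> \<beta>' \<le> \<beta> \<and> (\<forall>m<N. 0 \<le> w m) \<and> (\<Sum>m<N. w m) \<le> Bd
      \<and> E k \<inter> {0..1} \<subseteq> (\<Union>m<N. {c m..c m + \<beta>'})
      \<and> (\<forall>m<N. \<forall>y\<in>{c m..c m+\<beta>'} \<inter> E k \<inter> {0..1}. \<forall>z\<in>{c m..c m+\<beta>'} \<inter> E k \<inter> {0..1}. norm (g y - g z) \<le> w m)"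
  shows "rectifiable_curve g"
  unfolding rectifiable_curve_def
proof (intro exI allI impI)
  fix n :: nat and t :: "nat \<Rightarrow> real"
  assume tt: "(\<forall>i\<le>n. t i \<in> {0..1}) \<and> (\<forall>i<n. t i \<le> t (Suc i))"
  have t01: "\<And>i. i \<le> n \<Longrightarrow> t i \<in> {0..1}" using tt by auto
  have tmono: "\<And>i j. i \<le> j \<Longrightarrow> j \<le> n \<Longrightarrow> t i \<le> t j"
    using sorted_mono_idx[of n t] tt by blast
  define arc where "arc i = {t i..t (Suc i)}" for i
  have arc01: "arc i \<subseteq> {0..1}" if "i < n" for i
    using t01[of i] t01[of "Suc i"] that by (auto simp: arc_def)
  define h where "h i s = norm (g s - g (t i))" for i s
  have hcont: "continuous_on (arc i) (h i)" if "i < n" for i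
    unfolding h_def using that arc01
    by (intro continuous_intros continuous_on_subset[OF g]) auto
  have hlip: "\<bar>h i y - h i z\<bar> \<le> norm (g y - g z)" for i y z
    using norm_triangle_ineq3[of "g y - g (t i)" "g z - g (t i)"] by (simp add: h_def)
  define Y where "Y i k = h i ` (arc i \<inter> E k)" for i k
  have cptY: "compact (Y i k)" if "i < n" for i k
    unfolding Y_def
    by (rule compact_continuous_image[OF continuous_on_subset[OF hcont[OF that]]])
       (auto simp: arc_def intro!: compact_Int_closed cl)
  have cptarc: "compact (h i ` arc i)" if "i < n" for i
    using hcont[OF that] by (intro compact_continuous_image) (auto simp: arc_def)
  have dle: "norm (g (t (Suc i)) - g (t i)) \<le> measure lborel (h i ` arc i)" if i: "i < n" for i
  proof -
    have c: "connected (h i ` arc i)"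
      using hcont[OF i] by (intro connected_continuous_image) (auto simp: arc_def)
    have ti: "t i \<le> t (Suc i)" using tt i by auto
    have "0 \<in> h i ` arc i" using ti by (auto simp: arc_def h_def image_iff intro!: bexI[of _ "t i"])
    moreover have "norm (g (t (Suc i)) - g (t i)) \<in> h i ` arc i"
      using ti by (auto simp: arc_def h_def image_iff intro!: bexI[of _ "t (Suc i)"])
    ultimately have sub: "{0..norm (g (t (Suc i)) - g (t i))} \<subseteq> h i ` arc i"
      using connected_contains_Icc[OF c] by blast
    have "norm (g (t (Suc i)) - g (t i)) = measure lborel {0..norm (g (t (Suc i)) - g (t i))}" by simp
    also have "\<dots> \<le> measure lborel (h i ` arc i)"
      using sub cptarc[OF i] by (intro measure_mono_fmeasurable) (auto intro: fmeasurable_compact)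
    finally show ?thesis .
  qed
  have lim: "(\<lambda>k. measure lborel (Y i k)) \<longlonglongrightarrow> measure lborel (h i ` arc i)" if i: "i < n" for i
  proof -
    have un: "(\<Union>k. Y i k) = h i ` arc i"
    proof
      show "(\<Union>k. Y i k) \<subseteq> h i ` arc i" by (auto simp: Y_def)
      show "h i ` arc i \<subseteq> (\<Union>k. Y i k)"
      proof
        fix v assume "v \<in> h i ` arc i"
        then obtain s where s: "s \<in> arc i" "v = h i s" by auto
        then obtain k where "s \<in> E k" using cov arc01[OF i] by blast
        then show "v \<in> (\<Union>k. Y i k)" using s by (auto simp: Y_def)
      qed
    qed
    have "(\<lambda>k. measure lborel (Y i k)) \<longlonglongrightarrow> measure lborel (\<Union>k. Y i k)"
    proof (rule Lim_measure_incseq)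
      show "range (Y i) \<subseteq> sets lborel" using cptY[OF i] by (auto intro: borel_compact)
      show "incseq (Y i)"
        by (rule incseq_SucI) (use inc in \<open>auto simp: Y_def\<close>)
      show "emeasure lborel (\<Union>k. Y i k) \<noteq> \<infinity>"
        unfolding un using emeasure_compact_finite[OF cptarc[OF i]] by simp
    qed
    then show ?thesis by (simp add: un)
  qed
  show "(\<Sum>i<n. norm (g (t (Suc i)) - g (t i))) \<le> 4 * Bd"
  proof (rule ccontr)
    assume "\<not> ?thesis"
    then have gt: "(\<Sum>i<n. norm (g (t (Suc i)) - g (t i))) > 4 * Bd" by simp
    have "(\<Sum>i<n. norm (g (t (Suc i)) - g (t i))) \<le> (\<Sum>i<n. measure lborel (h i ` arc i))"
      by (intro sum_mono dle) auto
    with gt have gt2: "(\<Sum>i<n. measure lborel (h i ` arc i)) > 4 * Bd" by simp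
    have "(\<lambda>k. \<Sum>i<n. measure lborel (Y i k)) \<longlonglongrightarrow> (\<Sum>i<n. measure lborel (h i ` arc i))"
      by (intro tendsto_sum lim) auto
    from order_tendstoD(1)[OF this gt2] obtain k where
      kk: "(\<Sum>i<n. measure lborel (Y i k)) > 4 * Bd"
      by (auto simp: eventually_sequentially)
    define P where "P = {t (Suc i) - t i | i. i < n \<and> t i < t (Suc i)}"
    have finP: "finite P" unfolding P_def by auto
    define \<beta> where "\<beta> = (if P = {} then 1 else Min P / 2)"
    have Ppos: "\<And>p. p \<in> P \<Longrightarrow> p > 0" unfolding P_def by auto
    have \<beta>pos: "\<beta> > 0" using finP Ppos by (auto simp: \<beta>_def)
    have \<beta>gap: "\<beta> < t (Suc i) - t i" if "i < n" "t i < t (Suc i)" for i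
    proof -
      have "t (Suc i) - t i \<in> P" using that unfolding P_def by blast
      then have "P \<noteq> {}" "Min P \<le> t (Suc i) - t i" using finP by auto
      moreover have "Min P > 0" using finP Ppos \<open>P \<noteq> {}\<close> by auto
      ultimately show ?thesis by (simp add: \<beta>_def)
    qed
    from cells[OF \<beta>pos, of k] obtain N :: nat and c w \<beta>' where cwall: "(0 < \<beta>') \<and> (\<beta>' \<le> \<beta>) \<and> (\<forall>m<N. 0 \<le> w m) \<and> ((\<Sum>m<N. w m) \<le> Bd) \<and> (E k \<inter> {0..1} \<subseteq> (\<Union>m<N. {c m..c m + \<beta>'})) \<and> (\<forall>m<N. \<forall>y\<in>{c m..c m+\<beta>'} \<inter> E k \<inter> {0..1}. \<forall>z\<in>{c m..c m+\<beta>'} \<inter> E k \<inter> {0..1}. norm (g y - g z) \<le> w m)"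
      by (elim exE) (rule that, assumption)
    have cw: "0 < \<beta>'" "\<beta>' \<le> \<beta>" "\<forall>m<N. 0 \<le> w m" "(\<Sum>m<N. w m) \<le> Bd" "E k \<inter> {0..1} \<subseteq> (\<Union>m<N. {c m..c m + \<beta>'})" "\<forall>m<N. \<forall>y\<in>{c m..c m+\<beta>'} \<inter> E k \<inter> {0..1}. \<forall>z\<in>{c m..c m+\<beta>'} \<inter> E k \<inter> {0..1}. norm (g y - g z) \<le> w m"
      using cwall by blast+
    define J where "J m = {c m..c m + \<beta>'}" for m
    define T where "T i m = measure lborel (h i ` (arc i \<inter> J m \<inter> E k))" for i m
    have cptZ: "compact (arc i \<inter> J m \<inter> E k)" for i m
      by (auto simp: arc_def J_def intro!: compact_Int_closed cl)
    have Yle: "measure lborel (Y i k) \<le> (\<Sum>m<N. T i m)" if i: "i < n" for i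
    proof -
      have "Y i k \<subseteq> (\<Union>m<N. h i ` (arc i \<inter> J m \<inter> E k))"
        using cw(5) arc01[OF i] unfolding Y_def J_def by blast
      then have "measure lborel (Y i k) \<le> measure lborel (\<Union>m<N. h i ` (arc i \<inter> J m \<inter> E k))"
        by (intro measure_mono_fmeasurable)
           (auto intro!: borel_compact cptY[OF i] fmeasurable_compact compact_UN compact_continuous_image
              cptZ continuous_on_subset[OF hcont[OF i]])
      also have "\<dots> \<le> (\<Sum>m<N. T i m)" unfolding T_def
        by (intro measure_UNION_le)
           (auto intro!: borel_compact compact_continuous_image cptZ continuous_on_subset[OF hcont[OF i]])
      finally show ?thesis .
    qed
    have Tle: "T i m \<le> 2 * w m" if i: "i < n" and m: "m < N" for i m
      unfolding T_def
    proof (rule measure_small_image)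
      show "compact (arc i \<inter> J m \<inter> E k)" by (rule cptZ)
      show "continuous_on (arc i \<inter> J m \<inter> E k) (h i)" by (rule continuous_on_subset[OF hcont[OF i]]) auto
      show "0 \<le> w m" using cw(3) m by auto
      show "\<forall>y\<in>arc i \<inter> J m \<inter> E k. \<forall>z\<in>arc i \<inter> J m \<inter> E k. \<bar>h i y - h i z\<bar> \<le> w m"
      proof (intro ballI)
        fix y z assume yz: "y \<in> arc i \<inter> J m \<inter> E k" "z \<in> arc i \<inter> J m \<inter> E k"
        then have "y \<in> {0..1}" "z \<in> {0..1}" using arc01[OF i] by auto
        then have "norm (g y - g z) \<le> w m" using cw(6) m yz by (auto simp: J_def)
        then show "\<bar>h i y - h i z\<bar> \<le> w m" using hlip[of i y z] by linarith
      qed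
    qed
    have Tcnt: "(\<Sum>i<n. T i m) \<le> 4 * w m" if m: "m < N" for m
    proof -
      define I where "I = {i. i < n \<and> T i m \<noteq> 0}"
      have finI: "finite I" by (auto simp: I_def)
      have nz: "\<exists>y z. y \<in> arc i \<inter> J m \<inter> E k \<and> z \<in> arc i \<inter> J m \<inter> E k \<and> y < z" if "i \<in> I" for i
      proof (rule ccontr)
        assume "\<not> ?thesis"
        then have "\<forall>y\<in>arc i \<inter> J m \<inter> E k. \<forall>z\<in>arc i \<inter> J m \<inter> E k. y = z"
          by (metis linorder_neqE_linordered_idom)
        then have "T i m = 0" unfolding T_def by (rule measure_point_image)
        then show False using that by (auto simp: I_def)
      qed
      have no3: False if tri: "i1 \<in> I" "i2 \<in> I" "i3 \<in> I" "i1 < i2" "i2 < i3" for i1 i2 i3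
      proof -
        obtain p where p: "p \<in> arc i1 \<inter> J m" using nz[OF tri(1)] by blast
        obtain q where q: "q \<in> arc i3 \<inter> J m" using nz[OF tri(3)] by blast
        obtain y z where yz: "y \<in> arc i2" "z \<in> arc i2" "y < z" using nz[OF tri(2)] by blast
        have n3: "i3 < n" using tri(3) by (auto simp: I_def)
        have gap: "t i2 < t (Suc i2)" using yz by (auto simp: arc_def)
        have "p \<le> t (Suc i1)" using p by (auto simp: arc_def)
        also have "\<dots> \<le> t i2" using tmono[of "Suc i1" i2] tri n3 by auto
        finally have pl: "p \<le> t i2" .
        have "t (Suc i2) \<le> t i3" using tmono[of "Suc i2" i3] tri n3 by auto
        also have "\<dots> \<le> q" using q by (auto simp: arc_def)
        finally have ql: "t (Suc i2) \<le> q" .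
        have "\<beta> < t (Suc i2) - t i2" using \<beta>gap[OF _ gap] tri n3 by auto
        moreover have "q - p \<le> \<beta>'" using p q by (auto simp: J_def)
        ultimately show False using pl ql cw(2) by linarith
      qed
      have cI: "card I \<le> 2" using card_le2_lemma[OF finI] no3 by blast
      have "(\<Sum>i<n. T i m) = (\<Sum>i\<in>I. T i m)"
        by (rule sum.mono_neutral_right) (auto simp: I_def)
      also have "\<dots> \<le> (\<Sum>i\<in>I. 2 * w m)"
        by (intro sum_mono Tle m) (auto simp: I_def)
      also have "\<dots> = real (card I) * (2 * w m)" by simp
      also have "\<dots> \<le> 2 * (2 * w m)"
        using cI cw(3) m by (intro mult_right_mono) auto
      finally show ?thesis by simp
    qed
    have "(\<Sum>i<n. measure lborel (Y i k)) \<le> (\<Sum>i<n. \<Sum>m<N. T i m)"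
      by (intro sum_mono Yle) auto
    also have "\<dots> = (\<Sum>m<N. \<Sum>i<n. T i m)" by (rule sum.swap)
    also have "\<dots> \<le> (\<Sum>m<N. 4 * w m)" by (intro sum_mono Tcnt) auto
    also have "\<dots> \<le> 4 * Bd" using cw(4) by (simp add: sum_distrib_left[symmetric])
    finally show False using kk by simp
  qed
qed



lemma norm_cis_diff: "norm (cis a - cis b) = 2 * \<bar>sin ((a - b) / 2)\<bar>"
proof -
  have "(norm (cis a - cis b))^2 = (cos a - cos b)^2 + (sin a - sin b)^2"
    by (simp add: cmod_power2)
  also have "\<dots> = 2 - 2 * cos (a - b)"
    by (simp add: cos_diff power2_eq_square algebra_simps)
  also have "cos (a - b) = 1 - 2 * (sin ((a - b)/2))^2"
  proof -
    define d where "d = (a - b) / 2"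
    have "a - b = 2 * d" by (simp add: d_def)
    then show ?thesis using cos_double_sin[of d] by (simp add: d_def[symmetric])
  qed
  finally have "(norm (cis a - cis b))^2 = (2 * \<bar>sin ((a - b) / 2)\<bar>)^2"
    by (simp add: power2_eq_square)
  then show ?thesis
    by (rule power2_eq_imp_eq) auto
qed

lemma sin_ge_half: fixes x :: real assumes "0 \<le> x" "x \<le> pi / 2" shows "x / 2 \<le> sin x"
proof -
  have "\<bar>sin x - (\<Sum>m<3. sin_coeff m * x ^ m)\<bar> \<le> inverse (fact 3) * \<bar>x\<bar> ^ 3"
    by (rule Maclaurin_sin_bound)
  moreover have "(\<Sum>m<3. sin_coeff m * x ^ m) = x"
    by (simp add: sin_coeff_def eval_nat_numeral)
  ultimately have "\<bar>sin x - x\<bar> \<le> inverse (fact 3) * \<bar>x\<bar> ^ 3" by simp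
  then have "\<bar>sin x - x\<bar> \<le> x ^ 3 / 6" using assms by (simp add: eval_nat_numeral)
  moreover have "x - sin x \<le> \<bar>sin x - x\<bar>" by linarith
  ultimately have "x - sin x \<le> x ^ 3 / 6" by linarith
  then have "sin x \<ge> x - x ^ 3 / 6" by linarith
  moreover have "x ^ 2 \<le> 3"
  proof -
    have "x ^ 2 \<le> (pi / 2) ^ 2" using assms by (intro power_mono) auto
    also have "\<dots> \<le> 3"
    proof -
      have p: "pi \<le> 16/5" using pi_approx by (simp add: abs_le_iff)
      have "pi * pi \<le> 16/5 * (16/5)" by (rule mult_mono[OF p p]) auto
      then show ?thesis by (simp add: power2_eq_square)
    qed
    finally show ?thesis .
  qed
  then have "x ^ 3 / 6 \<le> x / 2" using assms
    using mult_left_mono[of "x*x" 3 x] by (simp add: power3_eq_cube power2_eq_square)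
  ultimately show ?thesis by linarith
qed

definition gam :: "real \<Rightarrow> real \<Rightarrow> complex" where
  "gam R s = of_real R * cis (2 * pi * s)"

lemma gam_dist_le: assumes "R \<ge> 0" shows "norm (gam R s - gam R u) \<le> 2 * pi * R * \<bar>s - u\<bar>"
proof -
  have "norm (gam R s - gam R u) = R * norm (cis (2 * pi * s) - cis (2 * pi * u))"
    unfolding gam_def using assms by (simp add: right_diff_distrib[symmetric] norm_mult)
  also have "\<dots> = R * (2 * \<bar>sin (pi * (s - u))\<bar>)"
  proof -
    have "(2 * pi * s - 2 * pi * u) / 2 = pi * (s - u)" by (simp add: field_simps)
    then show ?thesis by (simp add: norm_cis_diff)
  qed
  also have "\<dots> \<le> R * (2 * \<bar>pi * (s - u)\<bar>)"
    using assms abs_sin_x_le_abs_x by (intro mult_left_mono) auto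
  also have "\<bar>pi * (s - u)\<bar> = pi * \<bar>s - u\<bar>" by (simp add: abs_mult)
  finally show ?thesis by (simp add: mult_ac)
qed

lemma gam_dist_ge: assumes "R \<ge> 0" "\<bar>s - u\<bar> \<le> 1/2"
  shows "pi * R * \<bar>s - u\<bar> \<le> norm (gam R s - gam R u)"
proof -
  have "norm (gam R s - gam R u) = R * norm (cis (2 * pi * s) - cis (2 * pi * u))"
    unfolding gam_def using assms by (simp add: right_diff_distrib[symmetric] norm_mult)
  also have "\<dots> = R * (2 * \<bar>sin (pi * (s - u))\<bar>)"
  proof -
    have "(2 * pi * s - 2 * pi * u) / 2 = pi * (s - u)" by (simp add: field_simps)
    then show ?thesis by (simp add: norm_cis_diff)
  qed
  also have "\<bar>sin (pi * (s - u))\<bar> = sin (pi * \<bar>s - u\<bar>)"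
  proof -
    have d: "pi*(s-u) = pi*\<bar>s-u\<bar> \<or> pi*(s-u) = -(pi*\<bar>s-u\<bar>)" by (auto simp: abs_if algebra_simps)
    have "pi*\<bar>s-u\<bar> \<le> pi*1" using assms by (intro mult_left_mono) auto
    then have nn: "sin(pi*\<bar>s-u\<bar>) \<ge> 0" by (intro sin_ge_zero) auto
    from d nn show ?thesis by auto
  qed
  also have "sin (pi * \<bar>s - u\<bar>) \<ge> pi * \<bar>s - u\<bar> / 2"
    using assms by (intro sin_ge_half) auto
  then have "R * (2 * sin (pi * \<bar>s - u\<bar>)) \<ge> R * (pi * \<bar>s - u\<bar>)"
    using assms by (intro mult_left_mono) auto
  finally show ?thesis by (simp add: mult_ac)
qed



lemma open_image_sub:
  fixes f :: "complex \<Rightarrow> complex"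
  assumes "continuous_on S f" "inj_on f S" "V \<subseteq> S" "open V"
  shows "open (f ` V)"
  using invariance_of_domain[of V f] assms continuous_on_subset inj_on_subset by blast

lemma frontier_image_ball:
  fixes f :: "complex \<Rightarrow> complex"
  assumes cf: "continuous_on S f" and inj: "inj_on f S" and sub: "cball x r \<subseteq> S"
  shows "frontier (f ` ball x r) \<subseteq> f ` sphere x r"
proof -
  have opV: "open (f ` ball x r)"
    using open_image_sub[OF cf inj] sub ball_subset_cball by blast
  have "compact (f ` cball x r)"
    using cf sub by (intro compact_continuous_image) (auto intro: continuous_on_subset)
  then have "closure (f ` ball x r) \<subseteq> f ` cball x r"
    by (intro closure_minimal) (auto intro: compact_imp_closed)
  then have "frontier (f ` ball x r) \<subseteq> f ` cball x r - f ` ball x r"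
    using opV by (auto simp: frontier_def interior_open)
  also have "\<dots> \<subseteq> f ` sphere x r"
  proof
    fix v assume "v \<in> f ` cball x r - f ` ball x r"
    then obtain y where y: "y \<in> cball x r" "v = f y" by auto
    then have "y \<notin> ball x r" using \<open>v \<in> f ` cball x r - f ` ball x r\<close> by auto
    then have "y \<in> sphere x r" using y by auto
    then show "v \<in> f ` sphere x r" using \<open>v = f y\<close> by auto
  qed
  finally show ?thesis .
qed

lemma ball_in_image:
  fixes f :: "complex \<Rightarrow> complex"
  assumes cf: "continuous_on S f" and inj: "inj_on f S" and sub: "cball x r \<subseteq> S"
    and r: "r > 0" and m: "\<forall>z\<in>sphere x r. m \<le> norm (f z - f x)"
  shows "ball (f x) m \<subseteq> f ` ball x r"
proof (rule ccontr)
  assume not: "\<not> ?thesis"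
  then have "m > 0" by (auto simp: ball_empty)
  then have "f x \<in> ball (f x) m \<inter> f ` ball x r" using r by auto
  then have "ball (f x) m \<inter> f ` ball x r \<noteq> {}" by blast
  moreover have "ball (f x) m - f ` ball x r \<noteq> {}" using not by auto
  ultimately have "ball (f x) m \<inter> frontier (f ` ball x r) \<noteq> {}"
    by (intro connected_Int_frontier) auto
  then obtain z where z: "z \<in> sphere x r" "f z \<in> ball (f x) m"
    using frontier_image_ball[OF cf inj sub] by blast
  have "m \<le> norm (f z - f x)" using m z(1) by blast
  then show False using z(2) by (auto simp: dist_norm norm_minus_commute)
qed

lemma image_in_cball:
  fixes f :: "complex \<Rightarrow> complex"
  assumes cf: "continuous_on S f" and inj: "inj_on f S" and sub: "cball x r \<subseteq> S"
    and K: "\<forall>z\<in>sphere x r. norm (f z - f x) \<le> K" and y: "y \<in> cball x r"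
  shows "norm (f y - f x) \<le> K"
proof (rule ccontr)
  assume not: "\<not> ?thesis"
  have ysph: "y \<notin> sphere x r" using not K by auto
  then have yb: "y \<in> ball x r" using y by auto
  define W where "W = - cball (f x) K"
  have cW: "connected W" unfolding W_def
    by (rule connected_complement_bounded_convex) auto
  have "f y \<in> W" using not by (auto simp: W_def dist_norm norm_minus_commute)
  then have "W \<inter> f ` ball x r \<noteq> {}" using yb by auto
  moreover have "W - f ` ball x r \<noteq> {}"
  proof -
    have "compact (f ` cball x r)"
      using cf sub by (intro compact_continuous_image) (auto intro: continuous_on_subset)
    then have "bounded (f ` cball x r)" by (rule compact_imp_bounded)
    then obtain B where B: "B > 0" "\<forall>v\<in>f ` cball x r. norm v \<le> B" by (auto simp: bounded_pos)
    define c where "c = B + norm (f x) + \<bar>K\<bar> + 1"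
    define p where "p = (of_real c :: complex)"
    have "c > 0" using B by (simp add: c_def add_pos_nonneg)
    then have "norm p = c" unfolding p_def by simp
    then have np: "norm p = B + norm (f x) + \<bar>K\<bar> + 1" by (simp add: c_def)
    have "p \<notin> f ` cball x r"
    proof
      assume "p \<in> f ` cball x r"
      then have "norm p \<le> B" using B(2) by blast
      moreover have "norm p > B" using np by (simp add: add_nonneg_pos add_pos_nonneg)
      ultimately show False by linarith
    qed
    then have "p \<notin> f ` ball x r" using ball_subset_cball by blast
    moreover have "norm (p - f x) \<ge> norm p - norm (f x)" by (rule norm_triangle_ineq2)
    then have "norm (p - f x) > K" using np B(1) abs_ge_self[of K] by linarith
    then have "p \<in> W" by (auto simp: W_def dist_norm norm_minus_commute)
    ultimately show ?thesis by blast
  qed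
  ultimately have "W \<inter> frontier (f ` ball x r) \<noteq> {}"
    by (intro connected_Int_frontier cW)
  then obtain z where z: "z \<in> sphere x r" "f z \<in> W"
    using frontier_image_ball[OF cf inj sub] by blast
  then show False using K by (auto simp: W_def dist_norm norm_minus_commute)
qed



lemma qc_pairs:
  fixes f :: "complex \<Rightarrow> complex"
  assumes qc: "quasiconformal_on S f"
  obtains Hp where "Hp > 0" "\<forall>x\<in>S. \<exists>\<rho>>0. \<forall>r. 0 < r \<and> r < \<rho> \<longrightarrow>
      (\<forall>u v. norm u = r \<longrightarrow> norm v = r \<longrightarrow> norm (f (x + u) - f x) \<le> Hp * norm (f (x + v) - f x))"
proof -
  from qc obtain H where opS: "open S" and inj: "inj_on f S" and cf: "continuous_on S f"
    and H: "\<forall>x\<in>S. Limsup (at_right 0) (\<lambda>r. ereal (max_stretch f x r / min_stretch f x r)) \<le> ereal H"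
    unfolding quasiconformal_on_def by blast
  define Hp where "Hp = \<bar>H\<bar> + 1"
  have Hp: "Hp > 0" by (simp add: Hp_def add_nonneg_pos)
  have "\<exists>\<rho>>0. \<forall>r. 0 < r \<and> r < \<rho> \<longrightarrow>
      (\<forall>u v. norm u = r \<longrightarrow> norm v = r \<longrightarrow> norm (f (x + u) - f x) \<le> Hp * norm (f (x + v) - f x))"
    if x: "x \<in> S" for x
  proof -
    obtain e where e: "e > 0" "ball x e \<subseteq> S" using opS x by (auto simp: open_contains_ball)
    have "Limsup (at_right 0) (\<lambda>r. ereal (max_stretch f x r / min_stretch f x r)) < ereal Hp"
      using H x by (rule_tac le_less_trans[of _ "ereal H"]) (auto simp: Hp_def)
    from Limsup_lessD[OF this] obtain b where b: "b > 0"
      "\<forall>r>0. r < b \<longrightarrow> ereal (max_stretch f x r / min_stretch f x r) < ereal Hp"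
      by (auto simp: eventually_at_right_field)
    define \<rho> where "\<rho> = min b e"
    have "\<forall>r. 0 < r \<and> r < \<rho> \<longrightarrow>
      (\<forall>u v. norm u = r \<longrightarrow> norm v = r \<longrightarrow> norm (f (x + u) - f x) \<le> Hp * norm (f (x + v) - f x))"
    proof (intro allI impI)
      fix r :: real and u v :: complex assume r: "0 < r \<and> r < \<rho>" and u: "norm u = r" and v: "norm v = r"
      have sub: "sphere x r \<subseteq> S" using r e by (auto simp: \<rho>_def)
      define Z where "Z = (\<lambda>y. norm (f y - f x)) ` sphere x r"
      have cZ: "compact Z" unfolding Z_def
        using sub cf by (intro compact_continuous_image continuous_intros) (auto intro: continuous_on_subset)
      have nZ: "Z \<noteq> {}" using r by (auto simp: Z_def)
      have pos: "z > 0" if "z \<in> Z" for z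
      proof -
        obtain y where y: "y \<in> sphere x r" "z = norm (f y - f x)" using \<open>z \<in> Z\<close> by (auto simp: Z_def)
        have "y \<noteq> x" using y r by auto
        then have "f y \<noteq> f x" using inj sub y x by (auto dest: inj_onD)
        then show ?thesis using y by simp
      qed
      have infZ: "Inf Z \<in> Z"
        using nZ cZ by (intro closed_contains_Inf) (auto intro: compact_imp_closed bounded_imp_bdd_below compact_imp_bounded)
      have bdd: "bdd_above Z" using cZ by (intro bounded_imp_bdd_above compact_imp_bounded)
      have mpos: "min_stretch f x r > 0" using pos[OF infZ] by (simp add: min_stretch_def Z_def)
      have "max_stretch f x r / min_stretch f x r < Hp" using b r by (auto simp: \<rho>_def)
      then have lt: "max_stretch f x r < Hp * min_stretch f x r" using mpos by (simp add: divide_less_eq)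
      have xu: "x + u \<in> sphere x r" "x + v \<in> sphere x r" using u v by (auto simp: dist_norm)
      have "norm (f (x + u) - f x) \<le> max_stretch f x r"
        unfolding max_stretch_def using xu bdd by (intro cSup_upper) (auto simp: Z_def)
      also have "\<dots> \<le> Hp * min_stretch f x r" using lt by simp
      also have "min_stretch f x r \<le> norm (f (x + v) - f x)"
      proof -
        have "bdd_below Z" by (rule bdd_belowI[of _ 0]) (auto simp: Z_def)
        then show ?thesis unfolding min_stretch_def Z_def[symmetric] using xu
          by (intro cInf_lower) (auto simp: Z_def)
      qed
      then have "Hp * min_stretch f x r \<le> Hp * norm (f (x + v) - f x)" using Hp by simp
      finally show "norm (f (x + u) - f x) \<le> Hp * norm (f (x + v) - f x)" .
    qed
    then show ?thesis using b e by (intro exI[of _ \<rho>]) (auto simp: \<rho>_def)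
  qed
  then show ?thesis using that Hp by blast
qed



lemma area_growth:
  fixes A G :: "real \<Rightarrow> real"
  assumes G: "\<And>t. G t = ln (sqrt (A (exp t) / pi))"
  and mono: "\<And>r r'. 0 < r \<Longrightarrow> r \<le> r' \<Longrightarrow> r' < rmax \<Longrightarrow> A r \<le> A r'"
  and nonneg: "\<And>r. 0 < r \<Longrightarrow> r < rmax \<Longrightarrow> A r \<ge> 0"
  and R: "R = exp tc" "R < rmax"
  and U: "open U" "tc \<in> U" and L: "L > 0"
  and bl: "\<forall>s\<in>U. \<forall>t\<in>U. \<bar>s - t\<bar> \<le> L * \<bar>G s - G t\<bar> \<and> \<bar>G s - G t\<bar> \<le> L * \<bar>s - t\<bar>"
  shows "\<exists>C \<delta>0. \<delta>0 > 0 \<and> (\<forall>\<delta>. 0 < \<delta> \<and> \<delta> < \<delta>0 \<longrightarrow> A (R + \<delta>) - A (R - \<delta>) \<le> C * \<delta>)"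
proof -
  obtain \<eta> where \<eta>: "\<eta> > 0" "ball tc \<eta> \<subseteq> U" using U by (auto simp: open_contains_ball)
  have Rpos: "R > 0" using R by simp
  define a where "a = tc - \<eta> / 2"
  define a' where "a' = tc - 3 * \<eta> / 4"
  have aU: "a \<in> U" "a' \<in> U" using \<eta> by (auto simp: a_def a'_def dist_real_def)
  have ea: "exp a < R" "exp a' \<le> exp a" using \<eta> R by (auto simp: a_def a'_def)
  have eaR: "exp a < rmax" "exp a' < rmax" using ea R by linarith+
  have Apos: "A (exp a) > 0"
  proof (rule ccontr)
    assume "\<not> ?thesis"
    moreover have "A (exp a) \<ge> 0" using nonneg[OF exp_gt_zero eaR(1)] .
    ultimately have z: "A (exp a) = 0" by simp
    have "A (exp a') \<le> A (exp a)" using mono[OF exp_gt_zero ea(2) eaR(1)] .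
    moreover have "A (exp a') \<ge> 0" using nonneg[OF exp_gt_zero eaR(2)] .
    ultimately have z': "A (exp a') = 0" using z by simp
    have "G a = G a'" using z z' by (simp add: G)
    moreover have "\<bar>a - a'\<bar> \<le> L * \<bar>G a - G a'\<bar>" using bl aU by blast
    ultimately have "\<bar>a - a'\<bar> \<le> 0" by simp
    then show False using \<eta> by (simp add: a_def a'_def)
  qed
  define C where "C = A R * 16 * L / R"
  define \<delta>0 where "\<delta>0 = min (R/2) (min (R - exp a) (min (exp (tc + \<eta>/2) - R) (min (rmax - R) (R / (8 * L)))))"
  have "exp (tc + \<eta>/2) > R" using R \<eta> by simp
  then have \<delta>0pos: "\<delta>0 > 0" using Rpos ea R L by (simp add: \<delta>0_def)
  have main: "A (R + \<delta>) - A (R - \<delta>) \<le> C * \<delta>" if d: "0 < \<delta>" "\<delta> < \<delta>0" for \<delta>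
  proof -
    have d1: "\<delta> < R/2" "\<delta> < R - exp a" "\<delta> < exp (tc + \<eta>/2) - R" "\<delta> < rmax - R" "\<delta> < R / (8 * L)"
      using d by (auto simp: \<delta>0_def)
    define t1 where "t1 = ln (R - \<delta>)"
    define t2 where "t2 = ln (R + \<delta>)"
    have pos: "R - \<delta> > 0" "R + \<delta> > 0" using d1 d by auto
    have "exp a < R - \<delta>" using d1 by linarith
    then have "ln (exp a) < ln (R - \<delta>)" using pos by (subst ln_less_cancel_iff) auto
    then have t1a: "a < t1" by (simp add: t1_def)
    have "R + \<delta> < exp (tc + \<eta>/2)" using d1 by linarith
    then have "ln (R + \<delta>) < ln (exp (tc + \<eta>/2))" using pos by (subst ln_less_cancel_iff) auto
    then have t2b: "t2 < tc + \<eta>/2" by (simp add: t2_def)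
    have lnR: "ln R = tc" using R by simp
    have "ln (R - \<delta>) \<le> ln R" using pos d by (subst ln_le_cancel_iff) auto
    then have t1le: "t1 \<le> tc" using lnR by (simp add: t1_def)
    have "ln R \<le> ln (R + \<delta>)" using pos d Rpos by (subst ln_le_cancel_iff) auto
    then have t2ge: "tc \<le> t2" using lnR by (simp add: t2_def)
    have et: "exp t1 = R - \<delta>" "exp t2 = R + \<delta>" using pos by (simp_all add: t1_def t2_def)
    have tU: "t1 \<in> U" "t2 \<in> U" using \<eta> t1a t2b t1le t2ge by (auto simp: a_def dist_real_def intro!: subsetD[OF \<eta>(2)])
    have e1: "exp a \<le> R - \<delta>" "R - \<delta> < rmax" using d1 R d by linarith+
    have A1pos: "A (R - \<delta>) > 0"
      using Apos mono[OF exp_gt_zero e1] by linarith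
    have A12: "A (R - \<delta>) \<le> A (R + \<delta>)" "A (R - \<delta>) \<le> A R"
      using mono[of "R - \<delta>" "R + \<delta>"] mono[of "R - \<delta>" R] d1 pos R d by auto
    have A2pos: "A (R + \<delta>) > 0" using A1pos A12 by simp
    have Gt: "G t = (ln (A (exp t)) - ln pi) / 2" if "A (exp t) > 0" for t
      using that by (simp add: G ln_sqrt ln_div)
    have "\<bar>G t2 - G t1\<bar> \<le> L * \<bar>t2 - t1\<bar>" using bl tU by blast
    moreover have "\<bar>t2 - t1\<bar> = t2 - t1" using t1le t2ge by simp
    ultimately have "G t2 - G t1 \<le> L * (t2 - t1)" by (metis abs_ge_self order_trans)
    then have lnle: "ln (A (R + \<delta>)) - ln (A (R - \<delta>)) \<le> 2 * L * (t2 - t1)"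
      using Gt[of t1] Gt[of t2] A1pos A2pos unfolding et by (simp add: field_simps)
    define y where "y = 2 * L * (t2 - t1)"
    have "t2 - t1 = ln ((R + \<delta>) / (R - \<delta>))" using pos by (simp add: t1_def t2_def ln_div)
    also have "\<dots> \<le> (R + \<delta>) / (R - \<delta>) - 1" using pos by (intro ln_le_minus_one) simp
    also have "\<dots> = 2 * \<delta> / (R - \<delta>)" using pos by (simp add: field_simps)
    also have "\<dots> \<le> 4 * \<delta> / R" using pos d d1 by (simp add: field_simps)
    finally have tt: "t2 - t1 \<le> 4 * \<delta> / R" .
    have y0: "0 \<le> y" using L t1le t2ge by (simp add: y_def)
    have "2 * L * (t2 - t1) \<le> 2 * L * (4 * \<delta> / R)" using tt L by (intro mult_left_mono) auto
    then have y1: "y \<le> 8 * L * \<delta> / R" by (simp add: y_def)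
    have "8 * L * \<delta> / R \<le> 1" using d1 L Rpos by (simp add: field_simps)
    then have y1': "y \<le> 1" using y1 by linarith
    have "y * y \<le> 1 * y" using y1' y0 by (intro mult_right_mono) auto
    then have ey: "exp y \<le> 1 + 2 * y"
      using exp_bound[OF y0 y1'] by (simp add: power2_eq_square)
    have "A (R + \<delta>) \<le> A (R - \<delta>) * exp y"
    proof -
      have "ln (A (R + \<delta>)) \<le> ln (A (R - \<delta>)) + y" using lnle by (simp add: y_def)
      then have "exp (ln (A (R + \<delta>))) \<le> exp (ln (A (R - \<delta>)) + y)" by simp
      then show ?thesis using A1pos A2pos by (simp add: exp_add)
    qed
    moreover have "A (R - \<delta>) * exp y \<le> A (R - \<delta>) * (1 + 2 * y)"
      using ey A1pos by (intro mult_left_mono) auto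
    ultimately have "A (R + \<delta>) - A (R - \<delta>) \<le> A (R - \<delta>) * (2 * y)"
      by (simp add: algebra_simps)
    also have "\<dots> \<le> A R * (2 * (8 * L * \<delta> / R))"
      using A12 A1pos y0 y1 by (intro mult_mono) auto
    also have "\<dots> = C * \<delta>" by (simp add: C_def)
    finally show ?thesis .
  qed
  show ?thesis using \<delta>0pos main by blast
qed




lemma disjoint_area:
  fixes f :: "complex \<Rightarrow> complex" and x :: "nat \<Rightarrow> complex"
  assumes cf: "continuous_on (ball 0 Rm) f" and inj: "inj_on f (ball 0 Rm)"
  and R: "R > 0" and d: "0 < \<delta>" "R + \<delta> < Rm"
  and fin: "finite I" and xs: "\<And>i. i \<in> I \<Longrightarrow> norm (x i) = R"
  and sep: "\<And>i j. i \<in> I \<Longrightarrow> j \<in> I \<Longrightarrow> i \<noteq> j \<Longrightarrow> 2 * \<delta> \<le> norm (x i - x j)"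
  shows "(\<Sum>i\<in>I. measure lebesgue (f ` ball (x i) \<delta>))
     \<le> measure lebesgue (f ` ball 0 (R + \<delta>)) - measure lebesgue (f ` ball 0 (R - \<delta>))"
proof -
  have lm: "f ` V \<in> lmeasurable" if "V \<subseteq> ball 0 (R + \<delta>)" "open V" for V
  proof (rule lmeasurable_open)
    have "cball 0 (R + \<delta>) \<subseteq> ball 0 Rm" using d by auto
    then have "compact (f ` cball 0 (R + \<delta>))"
      using cf by (intro compact_continuous_image) (auto intro: continuous_on_subset)
    then have "bounded (f ` cball 0 (R + \<delta>))" by (rule compact_imp_bounded)
    moreover have "f ` V \<subseteq> f ` cball 0 (R + \<delta>)" using that(1) by auto
    ultimately show "bounded (f ` V)" by (rule bounded_subset)
    have "ball 0 (R + \<delta>) \<subseteq> ball 0 Rm" using d by (intro subset_ball) simp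
    then have "V \<subseteq> ball 0 Rm" using that(1) by blast
    then show "open (f ` V)" using open_image_sub[OF cf inj] that(2) by blast
  qed
  have bsub: "ball (x i) \<delta> \<subseteq> ball 0 (R + \<delta>)" if "i \<in> I" for i
  proof
    fix y assume "y \<in> ball (x i) \<delta>"
    then have "norm (y - x i) < \<delta>" by (simp add: dist_norm norm_minus_commute)
    moreover have "norm y \<le> norm (x i) + norm (y - x i)" by (metis norm_triangle_sub add.commute)
    ultimately show "y \<in> ball 0 (R + \<delta>)" using xs[OF that] by simp
  qed
  have bout: "y \<notin> ball 0 (R - \<delta>)" if "i \<in> I" "y \<in> ball (x i) \<delta>" for i y
  proof -
    have "norm (x i - y) < \<delta>" using that(2) by (simp add: dist_norm)
    moreover have "norm (x i) \<le> norm y + norm (x i - y)" by (metis norm_triangle_sub add.commute)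
    ultimately show ?thesis using xs[OF that(1)] by simp
  qed
  have BR: "ball 0 (R + \<delta>) \<subseteq> ball 0 Rm" using d by auto
  have bb: "ball 0 (R - \<delta>) \<subseteq> ball 0 (R + \<delta>)" using d by (intro subset_ball) simp
  have lm1: "f ` ball 0 (R + \<delta>) \<in> lmeasurable" "f ` ball 0 (R - \<delta>) \<in> lmeasurable"
    using lm[OF order_refl open_ball] lm[OF bb open_ball] by auto
  have "(\<Sum>i\<in>I. measure lebesgue (f ` ball (x i) \<delta>)) = measure lebesgue (\<Union>i\<in>I. f ` ball (x i) \<delta>)"
  proof (rule measure_UNION'[symmetric])
    show "finite I" by (rule fin)
    show "f ` ball (x i) \<delta> \<in> fmeasurable lebesgue" if "i \<in> I" for i using lm bsub[OF that] by auto
    show "pairwise (\<lambda>i j. disjnt (f ` ball (x i) \<delta>) (f ` ball (x j) \<delta>)) I"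
      unfolding pairwise_def disjnt_def
    proof (intro ballI impI)
      fix i j assume ij: "i \<in> I" "j \<in> I" "i \<noteq> j"
      have "ball (x i) \<delta> \<inter> ball (x j) \<delta> = {}"
      proof (rule ccontr)
        assume "\<not> ?thesis"
        then obtain y where y: "y \<in> ball (x i) \<delta>" "y \<in> ball (x j) \<delta>" by auto
        have "norm (x i - x j) \<le> norm (x i - y) + norm (y - x j)" using norm_triangle_ineq[of "x i - y" "y - x j"] by simp
        moreover have "norm (x i - y) < \<delta>" "norm (y - x j) < \<delta>" using y by (auto simp: dist_norm norm_minus_commute)
        ultimately show False using sep[OF ij] by linarith
      qed
      moreover have "ball (x i) \<delta> \<subseteq> ball 0 Rm" "ball (x j) \<delta> \<subseteq> ball 0 Rm" using bsub ij BR by blast+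
      ultimately show "f ` ball (x i) \<delta> \<inter> f ` ball (x j) \<delta> = {}"
        using inj unfolding inj_on_def by blast
    qed
  qed
  also have "\<dots> \<le> measure lebesgue (f ` ball 0 (R + \<delta>) - f ` ball 0 (R - \<delta>))"
  proof (rule measure_mono_fmeasurable)
    show "(\<Union>i\<in>I. f ` ball (x i) \<delta>) \<subseteq> f ` ball 0 (R + \<delta>) - f ` ball 0 (R - \<delta>)"
    proof
      fix v assume "v \<in> (\<Union>i\<in>I. f ` ball (x i) \<delta>)"
      then obtain i y where iy: "i \<in> I" "y \<in> ball (x i) \<delta>" "v = f y" by auto
      have y1: "y \<in> ball 0 (R + \<delta>)" using bsub iy by blast
      have "f y \<notin> f ` ball 0 (R - \<delta>)"
      proof
        assume "f y \<in> f ` ball 0 (R - \<delta>)"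
        then obtain y' where y': "y' \<in> ball 0 (R - \<delta>)" "f y = f y'" by auto
        have "y' \<in> ball 0 Rm" using y' d by auto
        then have "y = y'" using inj y' y1 BR unfolding inj_on_def by blast
        then show False using bout[OF iy(1,2)] y' by simp
      qed
      then show "v \<in> f ` ball 0 (R + \<delta>) - f ` ball 0 (R - \<delta>)" using y1 iy by auto
    qed
    show "(\<Union>i\<in>I. f ` ball (x i) \<delta>) \<in> sets lebesgue"
      using lm bsub fin by (intro sets.finite_UN) (auto intro: fmeasurableD)
    show "f ` ball 0 (R + \<delta>) - f ` ball 0 (R - \<delta>) \<in> fmeasurable lebesgue"
      using lm1 by (intro fmeasurable_Diff) (auto intro: fmeasurableD)
  qed
  also have "\<dots> = measure lebesgue (f ` ball 0 (R + \<delta>)) - measure lebesgue (f ` ball 0 (R - \<delta>))"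
    using lm1 bb by (intro measure_Diff) (auto simp: fmeasurable_def intro: fmeasurableD)
  finally show ?thesis .
qed


lemma cover_cell:
  fixes s :: real and N :: nat
  assumes "N > 0" "s \<in> {0..1}"
  shows "\<exists>m<N. s \<in> {real m / N .. real m / N + 1 / N}"
proof (cases "s = 1")
  case True
  then show ?thesis using assms
    by (intro exI[of _ "N - 1"]) (auto simp: of_nat_diff field_simps)
next
  case False
  then have s1: "s < 1" using assms by auto
  define m where "m = nat \<lfloor>s * N\<rfloor>"
  have s0: "0 \<le> s * N" using assms by auto
  have "real m \<le> s * N" using s0 by (simp add: m_def)
  moreover have "s * N < real m + 1" using s0 by (simp add: m_def)
  moreover have "s * N < N" using s1 assms by simp
  ultimately have "real m < real N" "real m \<le> s * N" "s * N \<le> real m + 1" by linarith+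
  then have "m < N" "real m / N \<le> s" "s \<le> real m / N + 1 / N"
    using assms by (auto simp: field_simps)
  then show ?thesis by (intro exI[of _ m]) auto
qed

lemma cells_lemma:
  fixes f :: "complex \<Rightarrow> complex" and Rm R Hp C \<delta>0 \<rho>k \<beta> :: real and Ek :: "real set"
  assumes cf: "continuous_on (ball 0 Rm) f" and inj: "inj_on f (ball 0 Rm)"
   and R: "0 < R" "R < Rm" and Hp: "Hp > 0" and \<delta>0: "\<delta>0 > 0" and \<rho>k: "\<rho>k > 0" "\<rho>k \<le> (Rm - R) / 2"
   and area: "\<forall>\<delta>. 0 < \<delta> \<and> \<delta> < \<delta>0 \<longrightarrow> measure lebesgue (f ` ball 0 (R + \<delta>)) - measure lebesgue (f ` ball 0 (R - \<delta>)) \<le> C * \<delta>"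
   and Ek: "Ek = {s. \<forall>r u v. 0 < r \<and> r < \<rho>k \<and> norm u = r \<and> norm v = r \<longrightarrow>
              norm (f (gam R s + u) - f (gam R s)) \<le> Hp * norm (f (gam R s + v) - f (gam R s))}"
   and \<beta>: "\<beta> > 0"
  shows "\<exists>(N::nat) c w \<beta>'. 0 < \<beta>' \<and> \<beta>' \<le> \<beta> \<and> (\<forall>m<N. 0 \<le> w m) \<and> (\<Sum>m<N. w m) \<le> 2 * Hp * sqrt (20 * C * R)
      \<and> Ek \<inter> {0..1} \<subseteq> (\<Union>m<N. {c m..c m + \<beta>'})
      \<and> (\<forall>m<N. \<forall>y\<in>{c m..c m+\<beta>'} \<inter> Ek \<inter> {0..1}. \<forall>z\<in>{c m..c m+\<beta>'} \<inter> Ek \<inter> {0..1}.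
            norm (f (gam R y) - f (gam R z)) \<le> w m)"
proof -
  obtain N' :: nat where N': "real N' > max (1/\<beta>) (max (2*pi*R/\<rho>k) (2*pi*R/\<delta>0))"
    using reals_Archimedean2 by blast
  define N where "N = 2 * N'"
  have N'pos: "real N' > 0" using N' \<beta> by (smt (verit) divide_pos_pos)
  have Npos: "real N > 0" "N > 0" using N'pos by (auto simp: N_def)
  define \<delta> where "\<delta> = 2 * pi * R / N"
  have \<delta>pos: "\<delta> > 0" using R Npos by (simp add: \<delta>_def)
  have "real N' \<le> real N" by (simp add: N_def)
  then have NN: "real N > 1/\<beta>" "real N > 2*pi*R/\<rho>k" "real N > 2*pi*R/\<delta>0" using N' by auto
  have \<beta>N: "1 / real N \<le> \<beta>" using NN(1) \<beta> Npos by (simp add: field_simps)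
  have \<delta>\<rho>: "\<delta> < \<rho>k" using NN(2) \<rho>k Npos by (simp add: \<delta>_def field_simps)
  have \<delta>\<delta>0: "\<delta> < \<delta>0" using NN(3) \<delta>0 Npos by (simp add: \<delta>_def field_simps)
  have "2 * \<rho>k \<le> Rm - R" using \<rho>k(2) by simp
  then have R\<delta>: "R + \<delta> < Rm" using \<delta>\<rho> \<rho>k(1) by linarith
  define J where "J m = {real m / N .. real m / N + 1 / N}" for m :: nat
  define G where "G = {m. m < N \<and> J m \<inter> Ek \<inter> {0..1} \<noteq> {}}"
  have finG: "finite G" by (auto simp: G_def)
  have cardG: "card G \<le> N"
  proof -
    have "G \<subseteq> {..<N}" by (auto simp: G_def)
    then show ?thesis using card_mono[of "{..<N}" G] by simp
  qed
  define p where "p m = (SOME s. s \<in> J m \<inter> Ek \<inter> {0..1})" for m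
  have pG: "p m \<in> J m \<inter> Ek \<inter> {0..1}" if "m \<in> G" for m
  proof -
    have "\<exists>s. s \<in> J m \<inter> Ek \<inter> {0..1}" using that by (auto simp: G_def)
    then show ?thesis unfolding p_def by (rule someI_ex)
  qed
  define x where "x m = gam R (p m)" for m
  have nx: "norm (x m) = R" for m using R by (simp add: x_def gam_def norm_mult)
  define l where "l m = min_stretch f (x m) \<delta>" for m
  define Z where "Z m = (\<lambda>y. norm (f y - f (x m))) ` sphere (x m) \<delta>" for m
  have Zne: "Z m \<noteq> {}" for m using \<delta>pos by (auto simp: Z_def)
  have Zbdd: "bdd_below (Z m)" for m by (rule bdd_belowI[of _ 0]) (auto simp: Z_def)
  have lZ: "l m = Inf (Z m)" for m by (simp add: l_def min_stretch_def Z_def)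
  have cb: "cball (x m) \<delta> \<subseteq> ball 0 Rm" for m
  proof
    fix y assume "y \<in> cball (x m) \<delta>"
    then have "norm (y - x m) \<le> \<delta>" by (simp add: dist_norm norm_minus_commute)
    moreover have "norm y \<le> norm (x m) + norm (y - x m)" by (metis norm_triangle_sub add.commute)
    ultimately show "y \<in> ball 0 Rm" using nx[of m] R\<delta> by simp
  qed
  have l0: "l m \<ge> 0" for m unfolding lZ using Zne by (intro cInf_greatest) (auto simp: Z_def)
  have llow: "l m \<le> norm (f z - f (x m))" if "z \<in> sphere (x m) \<delta>" for m z
    unfolding lZ using Zbdd that by (intro cInf_lower) (auto simp: Z_def)
  have lup: "norm (f z - f (x m)) \<le> Hp * l m" if m: "m \<in> G" and z: "z \<in> sphere (x m) \<delta>" for m z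
  proof -
    have pE: "p m \<in> Ek" using pG[OF m] by blast
    have key: "norm (f (x m + u) - f (x m)) \<le> Hp * norm (f (x m + v) - f (x m))"
      if "norm u = \<delta>" "norm v = \<delta>" for u v
      using pE that \<delta>pos \<delta>\<rho> unfolding Ek x_def by blast
    have "norm (f z - f (x m)) / Hp \<le> l m"
      unfolding lZ using Zne
    proof (intro cInf_greatest)
      fix w assume "w \<in> Z m"
      then obtain y where y: "y \<in> sphere (x m) \<delta>" "w = norm (f y - f (x m))" by (auto simp: Z_def)
      have "norm (f (x m + (z - x m)) - f (x m)) \<le> Hp * norm (f (x m + (y - x m)) - f (x m))"
        using z y by (intro key) (auto simp: dist_norm norm_minus_commute)
      then show "norm (f z - f (x m)) / Hp \<le> w" using y Hp by (simp add: field_simps)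
    qed auto
    then show ?thesis using Hp by (simp add: field_simps)
  qed
  have larea: "pi * (l m)^2 \<le> measure lebesgue (f ` ball (x m) \<delta>)" for m
  proof -
    have sub: "ball (f (x m)) (l m) \<subseteq> f ` ball (x m) \<delta>"
      using ball_in_image[OF cf inj cb \<delta>pos] llow by blast
    have lmb: "f ` ball (x m) \<delta> \<in> lmeasurable"
    proof (rule lmeasurable_open)
      have "compact (f ` cball (x m) \<delta>)"
        using cf cb by (intro compact_continuous_image) (auto intro: continuous_on_subset)
      then show "bounded (f ` ball (x m) \<delta>)"
        by (rule bounded_subset[OF compact_imp_bounded]) auto
      show "open (f ` ball (x m) \<delta>)" using open_image_sub[OF cf inj] cb ball_subset_cball by blast
    qed
    have "measure lebesgue (ball (f (x m)) (l m)) = pi * (l m)^2"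
      using l0[of m] by (simp add: content_ball unit_ball_vol_2)
    moreover have "measure lebesgue (ball (f (x m)) (l m)) \<le> measure lebesgue (f ` ball (x m) \<delta>)"
      using sub lmb by (intro measure_mono_fmeasurable) auto
    ultimately show ?thesis by simp
  qed
  define w where "w m = (if m \<in> G then 2 * Hp * l m else 0)" for m
  have w0: "\<forall>m<N. 0 \<le> w m" using Hp l0 by (simp add: w_def)
  have cover: "Ek \<inter> {0..1} \<subseteq> (\<Union>m<N. {real m / N..real m / N + 1 / N})"
    using cover_cell[OF Npos(2)] by blast
  have wt: "\<forall>m<N. \<forall>y\<in>{real m / N..real m / N + 1 / N} \<inter> Ek \<inter> {0..1}. \<forall>z\<in>{real m / N..real m / N + 1 / N} \<inter> Ek \<inter> {0..1}.
            norm (f (gam R y) - f (gam R z)) \<le> w m"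
  proof (intro allI impI ballI)
    fix m y z assume m: "m < N" and y: "y \<in> {real m / N..real m / N + 1 / N} \<inter> Ek \<inter> {0..1}"
      and z: "z \<in> {real m / N..real m / N + 1 / N} \<inter> Ek \<inter> {0..1}"
    have mG: "m \<in> G" using m y by (auto simp: G_def J_def)
    have close: "norm (f (gam R q) - f (x m)) \<le> Hp * l m" if q: "q \<in> J m" for q
    proof -
      have "\<bar>q - p m\<bar> \<le> 1 / N" using q pG[OF mG] by (auto simp: J_def abs_le_iff)
      moreover have "2 * pi * R \<ge> 0" using R by simp
      ultimately have "2 * pi * R * \<bar>q - p m\<bar> \<le> 2 * pi * R * (1 / N)"
        by (intro mult_left_mono) auto
      moreover have "norm (gam R q - x m) \<le> 2 * pi * R * \<bar>q - p m\<bar>"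
        using gam_dist_le[of R q "p m"] R unfolding x_def by simp
      ultimately have "norm (gam R q - x m) \<le> 2 * pi * R * (1 / N)" by linarith
      then have "gam R q \<in> cball (x m) \<delta>" by (simp add: \<delta>_def dist_norm norm_minus_commute)
      then show ?thesis using image_in_cball[OF cf inj cb] lup[OF mG] by blast
    qed
    have "norm (f (gam R y) - f (gam R z)) \<le> norm (f (gam R y) - f (x m)) + norm (f (gam R z) - f (x m))"
      using norm_triangle_ineq4[of "f (gam R y) - f (x m)" "f (gam R z) - f (x m)"] by simp
    also have "\<dots> \<le> Hp * l m + Hp * l m" using close y z by (intro add_mono) (auto simp: J_def)
    finally show "norm (f (gam R y) - f (gam R z)) \<le> w m" using mG by (simp add: w_def)
  qed
  define cl where "cl m = (m mod 5, m < N')" for m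
  define T where "T = {0..<(5::nat)} \<times> (UNIV :: bool set)"
  have finT: "finite T" by (simp add: T_def)
  have cardT: "card T = 10" by (simp add: T_def card_cartesian_product)
  have sepcls: "2 * \<delta> \<le> norm (x m - x m')"
    if mm: "m \<in> G" "m' \<in> G" "cl m = cl m'" "m < m'" for m m'
  proof -
    have "m mod 5 = m' mod 5" using mm(3) by (simp add: cl_def)
    then have m5: "m + 5 \<le> m'" using mm(4) by presburger
    have pm: "real m / N \<le> p m" "p m \<le> real m / N + 1 / N" using pG[OF mm(1)] by (auto simp: J_def)
    have pm': "real m' / N \<le> p m'" "p m' \<le> real m' / N + 1 / N" using pG[OF mm(2)] by (auto simp: J_def)
    have "real m + 5 \<le> real m'" using m5 by linarith
    then have "(real m + 5) / N \<le> real m' / N" using Npos by (simp add: divide_right_mono)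
    then have d4: "p m' - p m \<ge> 4 / N" using pm pm' by (simp add: add_divide_distrib)
    have p01: "p m \<in> {0..1}" "p m' \<in> {0..1}" using pG mm by auto
    then have p01': "0 \<le> p m" "p m \<le> 1" "0 \<le> p m'" "p m' \<le> 1" by auto
    have half: "p m' - p m \<le> 1/2"
    proof (cases "m' < N'")
      case True
      then have "real m' + 1 \<le> real N'" by linarith
      then have "(real m' + 1) / N \<le> 1/2" using Npos by (simp add: N_def field_simps)
      moreover have "real m' / N + 1 / N = (real m' + 1) / N" by (simp add: add_divide_distrib)
      ultimately show ?thesis using pm' p01' by linarith
    next
      case False
      then have "\<not> m < N'" using mm(3) by (auto simp: cl_def)
      then have "real N' \<le> real m" by linarith
      then have "1/2 \<le> real m / N" using Npos by (simp add: N_def field_simps)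
      then show ?thesis using pm p01' by linarith
    qed
    have "4 / real N > 0" using Npos by simp
    then have ab: "\<bar>p m - p m'\<bar> = p m' - p m" using d4 by linarith
    have "pi * R * \<bar>p m - p m'\<bar> \<le> norm (x m - x m')"
      unfolding x_def using R half ab by (intro gam_dist_ge) auto
    moreover have "pi * R * (4 / N) \<le> pi * R * \<bar>p m - p m'\<bar>"
      using d4 R by (intro mult_left_mono) auto
    moreover have "2 * \<delta> = pi * R * (4 / N)" by (simp add: \<delta>_def)
    ultimately show ?thesis by linarith
  qed
  define \<Delta> where "\<Delta> = measure lebesgue (f ` ball 0 (R + \<delta>)) - measure lebesgue (f ` ball 0 (R - \<delta>))"
  have classbound: "(\<Sum>m\<in>{m \<in> G. cl m = c}. measure lebesgue (f ` ball (x m) \<delta>)) \<le> \<Delta>" for c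
    unfolding \<Delta>_def
  proof (rule disjoint_area[OF cf inj R(1) \<delta>pos R\<delta>])
    show "finite {m \<in> G. cl m = c}" using finG by simp
    show "norm (x i) = R" for i by (rule nx)
    fix i j assume ij: "i \<in> {m \<in> G. cl m = c}" "j \<in> {m \<in> G. cl m = c}" "i \<noteq> j"
    show "2 * \<delta> \<le> norm (x i - x j)"
    proof (cases "i < j")
      case True then show ?thesis using sepcls ij by auto
    next
      case False then have "j < i" using ij(3) by linarith
      then show ?thesis using sepcls[of j i] ij by (auto simp: norm_minus_commute)
    qed
  qed
  have \<Delta>0: "\<Delta> \<ge> 0"
  proof -
    have "(\<Sum>m\<in>{m \<in> G. cl m = c}. measure lebesgue (f ` ball (x m) \<delta>)) \<ge> 0" for c
      by (intro sum_nonneg) auto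
    from this[of "(0, True)"] show ?thesis using classbound[of "(0, True)"] by linarith
  qed
  have \<Delta>C: "\<Delta> \<le> C * \<delta>" using area \<delta>pos \<delta>\<delta>0 by (simp add: \<Delta>_def)
  have "(\<Sum>m\<in>G. measure lebesgue (f ` ball (x m) \<delta>)) = (\<Sum>c\<in>T. \<Sum>m\<in>{m \<in> G. cl m = c}. measure lebesgue (f ` ball (x m) \<delta>))"
    by (rule sum.group[symmetric]) (auto simp: finG finT T_def cl_def)
  also have "\<dots> \<le> of_nat (card T) * \<Delta>" by (rule sum_bounded_above) (rule classbound)
  also have "\<dots> = 10 * \<Delta>" by (simp add: cardT)
  finally have sumA: "(\<Sum>m\<in>G. measure lebesgue (f ` ball (x m) \<delta>)) \<le> 10 * \<Delta>" .
  have "pi * (\<Sum>m\<in>G. (l m)^2) \<le> (\<Sum>m\<in>G. measure lebesgue (f ` ball (x m) \<delta>))"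
    by (simp add: sum_distrib_left larea sum_mono)
  also have "\<dots> \<le> 10 * (C * \<delta>)" using sumA \<Delta>C by linarith
  finally have sl2: "pi * (\<Sum>m\<in>G. (l m)^2) \<le> 10 * (C * \<delta>)" .
  have "(\<Sum>m\<in>G. 1 * l m)^2 \<le> (\<Sum>m\<in>G. 1^2) * (\<Sum>m\<in>G. (l m)^2)"
    by (rule Cauchy_Schwarz_ineq_sum)
  also have "\<dots> = real (card G) * (\<Sum>m\<in>G. (l m)^2)" by simp
  also have "\<dots> \<le> real N * (\<Sum>m\<in>G. (l m)^2)"
    using cardG by (intro mult_right_mono) (auto intro: sum_nonneg)
  also have "\<dots> \<le> real N * (10 * (C * \<delta>) / pi)"
    using sl2 Npos by (intro mult_left_mono) (auto simp: field_simps)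
  also have "\<dots> = 20 * C * R" using Npos by (simp add: \<delta>_def field_simps)
  finally have "(\<Sum>m\<in>G. l m) \<le> sqrt (20 * C * R)" by (intro real_le_rsqrt) simp
  moreover have "(\<Sum>m<N. w m) = 2 * Hp * (\<Sum>m\<in>G. l m)"
  proof -
    have "(\<Sum>m<N. w m) = (\<Sum>m\<in>G. w m)"
      by (rule sum.mono_neutral_right) (auto simp: w_def G_def)
    also have "\<dots> = (\<Sum>m\<in>G. 2 * Hp * l m)" by (simp add: w_def)
    finally show ?thesis by (simp add: sum_distrib_left)
  qed
  ultimately have wsum: "(\<Sum>m<N. w m) \<le> 2 * Hp * sqrt (20 * C * R)"
    using Hp by simp
  show ?thesis
    apply (rule exI[of _ N], rule exI[of _ "\<lambda>m. real m / N"], rule exI[of _ w], rule exI[of _ "1 / N"])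
    using Npos \<beta>N w0 wsum cover wt by auto
qed




lemma lm_img:
  fixes f :: "complex \<Rightarrow> complex"
  assumes cf: "continuous_on (ball 0 Rm) f" and inj: "inj_on f (ball 0 Rm)" and r: "r < Rm"
  shows "f ` ball 0 r \<in> lmeasurable"
proof (cases "r \<le> 0")
  case True then have e: "f ` ball (0::complex) r = {}" by simp
  show ?thesis unfolding e by simp
next
  case False
  show ?thesis
  proof (rule lmeasurable_open)
    have "cball 0 r \<subseteq> ball 0 Rm" using r by auto
    then have "compact (f ` cball 0 r)"
      using cf by (intro compact_continuous_image) (auto intro: continuous_on_subset)
    then show "bounded (f ` ball 0 r)" by (rule bounded_subset[OF compact_imp_bounded]) auto
    have "ball 0 r \<subseteq> ball 0 Rm" using r by auto
    then show "open (f ` ball 0 r)" using open_image_sub[OF cf inj] by blast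
  qed
qed

lemma gam_cont: "continuous_on A (gam R)"
  unfolding gam_def by (intro continuous_intros)

lemma norm_gam: "R \<ge> 0 \<Longrightarrow> norm (gam R s) = R"
  by (simp add: gam_def norm_mult)

theorem proposition1p4:
  fixes M t0 :: real and f :: "complex \<Rightarrow> complex"
  assumes "quasiconformal_on (ball 0 (exp M)) f"
    and "f 0 = 0"
    and "t0 < M"
    and "\<not> rectifiable_curve (\<lambda>s. f (of_real (exp t0) * cis (2 * pi * s)))"
  shows "\<not> bi_lipschitz_at M t0 (log_mean_radius f)"
proof
  assume bl: "bi_lipschitz_at M t0 (log_mean_radius f)"
  define Rm where "Rm = exp M"
  define R where "R = exp t0"
  have qc: "quasiconformal_on (ball 0 Rm) f" using assms(1) by (simp add: Rm_def)
  then have cf: "continuous_on (ball 0 Rm) f" and inj: "inj_on f (ball 0 Rm)"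
    unfolding quasiconformal_on_def by auto
  have R: "0 < R" "R < Rm" using assms(3) by (auto simp: R_def Rm_def)
  obtain Hp where Hp: "Hp > 0" and Hpx: "\<forall>x\<in>ball 0 Rm. \<exists>\<rho>>0. \<forall>r. 0 < r \<and> r < \<rho> \<longrightarrow>
      (\<forall>u v. norm u = r \<longrightarrow> norm v = r \<longrightarrow> norm (f (x + u) - f x) \<le> Hp * norm (f (x + v) - f x))"
    using qc_pairs[OF qc] by blast
  from bl obtain U L where U: "open U" "t0 \<in> U" and L: "L > 0"
    and blU: "\<forall>s\<in>U. \<forall>t\<in>U. \<bar>s - t\<bar> \<le> L * \<bar>log_mean_radius f s - log_mean_radius f t\<bar>
        \<and> \<bar>log_mean_radius f s - log_mean_radius f t\<bar> \<le> L * \<bar>s - t\<bar>"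
    unfolding bi_lipschitz_at_def bi_lipschitz_on_def by blast
  define A where "A r = measure lebesgue (f ` ball 0 r)" for r
  obtain C \<delta>0 where \<delta>0: "\<delta>0 > 0" and area: "\<forall>\<delta>. 0 < \<delta> \<and> \<delta> < \<delta>0 \<longrightarrow> A (R + \<delta>) - A (R - \<delta>) \<le> C * \<delta>"
  proof -
    have "\<exists>C \<delta>0. \<delta>0 > 0 \<and> (\<forall>\<delta>. 0 < \<delta> \<and> \<delta> < \<delta>0 \<longrightarrow> A (R + \<delta>) - A (R - \<delta>) \<le> C * \<delta>)"
    proof (rule area_growth[where G = "log_mean_radius f" and rmax = Rm and U = U and L = L and tc = t0])
      show "log_mean_radius f t = ln (sqrt (A (exp t) / pi))" for t
        by (simp add: log_mean_radius_def mean_radius_def A_def)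
      show "A r \<le> A r'" if "0 < r" "r \<le> r'" "r' < Rm" for r r'
        unfolding A_def using that lm_img[OF cf inj, of r'] lm_img[OF cf inj, of r]
        by (intro measure_mono_fmeasurable) (auto intro: fmeasurableD)
      show "A r \<ge> 0" for r by (simp add: A_def)
    qed (use R U L blU in \<open>auto simp: R_def\<close>)
    then show ?thesis using that by blast
  qed
  define Dm where "Dm = (Rm - R) / 2"
  have Dm: "Dm > 0" using R by (simp add: Dm_def)
  define \<rho> where "\<rho> k = min (1 / (real k + 1)) Dm" for k :: nat
  have \<rho>pos: "\<rho> k > 0" for k using Dm by (simp add: \<rho>_def)
  define E where "E k = {s. \<forall>r u v. 0 < r \<and> r < \<rho> k \<and> norm u = r \<and> norm v = r \<longrightarrow>
              norm (f (gam R s + u) - f (gam R s)) \<le> Hp * norm (f (gam R s + v) - f (gam R s))}" for k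
  have inS: "gam R s + u \<in> ball 0 Rm" if "norm u < Dm" for s u
  proof -
    have "norm (gam R s + u) \<le> norm (gam R s) + norm u" by (rule norm_triangle_ineq)
    then show ?thesis using that R norm_gam[of R s] by (simp add: Dm_def)
  qed
  have contu: "continuous_on UNIV (\<lambda>s. f (gam R s + u))" if "norm u < Dm" for u
    by (rule continuous_on_compose2[OF cf, of UNIV "\<lambda>s. gam R s + u"])
       (auto intro!: continuous_intros gam_cont inS that)
  have c0: "continuous_on UNIV (\<lambda>s. f (gam R s))" using contu[of 0] Dm by simp
  have "rectifiable_curve (\<lambda>s. f (gam R s))"
  proof (rule AL[where E = E and Bd = "2 * Hp * sqrt (20 * C * R)"])
    show "continuous_on {0..1} (\<lambda>s. f (gam R s))"
      using contu[of 0] Dm by (auto intro: continuous_on_subset)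
    show "closed (E k)" for k
    proof -
      have "E k = (\<Inter>(r, u, v) \<in> {(r, u, v). 0 < r \<and> r < \<rho> k \<and> norm u = r \<and> norm v = r}.
          {s. norm (f (gam R s + u) - f (gam R s)) \<le> Hp * norm (f (gam R s + v) - f (gam R s))})"
        by (auto simp: E_def)
      moreover have "closed {s. norm (f (gam R s + u) - f (gam R s)) \<le> Hp * norm (f (gam R s + v) - f (gam R s))}"
        if "r < \<rho> k" "norm u = r" "norm v = r" for r u v
      proof -
        have "norm u < Dm" "norm v < Dm" "norm (0::complex) < Dm" using that Dm by (auto simp: \<rho>_def)
        then show ?thesis
          using contu c0 by (intro closed_Collect_le continuous_intros) auto
      qed
      ultimately show ?thesis by (auto intro!: closed_INT)
    qed
    show "E k \<subseteq> E (Suc k)" for k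
    proof -
      have "1 / (real (Suc k) + 1) \<le> 1 / (real k + 1)" by (intro divide_left_mono) auto
      then have "\<rho> (Suc k) \<le> \<rho> k" unfolding \<rho>_def by (intro min.mono) auto
      then show ?thesis unfolding E_def by force
    qed
    show "\<exists>k. s \<in> E k" if "s \<in> {0..1}" for s
    proof -
      have "gam R s \<in> ball 0 Rm" using inS[of 0 s] Dm by simp
      then obtain r0 where r0: "r0 > 0" and P: "\<forall>r. 0 < r \<and> r < r0 \<longrightarrow>
        (\<forall>u v. norm u = r \<longrightarrow> norm v = r \<longrightarrow> norm (f (gam R s + u) - f (gam R s)) \<le> Hp * norm (f (gam R s + v) - f (gam R s)))"
        using Hpx by blast
      obtain n :: nat where n: "n > 0" "inverse (real n) < r0" using ex_inverse_of_nat_less[OF r0] by blast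
      have "\<rho> (n - 1) \<le> 1 / (real (n - 1) + 1)" by (simp add: \<rho>_def)
      also have "1 / (real (n - 1) + 1) = inverse (real n)" using n by (simp add: of_nat_diff field_simps)
      finally have "\<rho> (n - 1) < r0" using n by simp
      have "s \<in> E (n - 1)" unfolding E_def
      proof (intro CollectI allI impI)
        fix r :: real and u v :: complex assume h: "0 < r \<and> r < \<rho> (n - 1) \<and> norm u = r \<and> norm v = r"
        then have "0 < r \<and> r < r0" using \<open>\<rho> (n - 1) < r0\<close> by linarith
        then show "norm (f (gam R s + u) - f (gam R s)) \<le> Hp * norm (f (gam R s + v) - f (gam R s))"
          using P h by blast
      qed
      then show ?thesis by blast
    qed
    show "\<exists>(N::nat) c w \<beta>'. 0 < \<beta>' \<and> \<beta>' \<le> \<beta> \<and> (\<forall>m<N. 0 \<le> w m) \<and> (\<Sum>m<N. w m) \<le> 2 * Hp * sqrt (20 * C * R)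
      \<and> E k \<inter> {0..1} \<subseteq> (\<Union>m<N. {c m..c m + \<beta>'})
      \<and> (\<forall>m<N. \<forall>y\<in>{c m..c m+\<beta>'} \<inter> E k \<inter> {0..1}. \<forall>z\<in>{c m..c m+\<beta>'} \<inter> E k \<inter> {0..1}.
            norm (f (gam R y) - f (gam R z)) \<le> w m)" if "\<beta> > 0" for k \<beta>
    proof (rule cells_lemma[OF cf inj R Hp \<delta>0 \<rho>pos[of k] _ _ _ that])
      show "\<rho> k \<le> (Rm - R) / 2" unfolding \<rho>_def Dm_def by (rule min.cobounded2)
      show "\<forall>\<delta>. 0 < \<delta> \<and> \<delta> < \<delta>0 \<longrightarrow> measure lebesgue (f ` ball 0 (R + \<delta>)) - measure lebesgue (f ` ball 0 (R - \<delta>)) \<le> C * \<delta>"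
        using area by (simp add: A_def)
      show "E k = {s. \<forall>r u v. 0 < r \<and> r < \<rho> k \<and> norm u = r \<and> norm v = r \<longrightarrow>
              norm (f (gam R s + u) - f (gam R s)) \<le> Hp * norm (f (gam R s + v) - f (gam R s))}"
        by (simp add: E_def)
    qed
  qed
  then show False using assms(4) by (simp add: gam_def R_def)
qed

end
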